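(* Let $H_0,H_1\in\mathbb{C}^{d\times d}$ with $H_0$ invertible, put $P_0=H_0H_0^*+H_1H_1^*$, $P_1=H_0H_1^*$, $P(z)=P_1^*z^{-1}+P_0+P_1z$ (so $P(z)=H(z)H(z)^*$ with $H(z)=H_0+H_1z^{-1}$), $\bar X=H_0H_0^*$ and $A=H_1H_0^{-1}$. Define $g(X)=P_0-P_1^*X^{-1}P_1$ on invertible $d\times d$ matrices. Then: (a) $g(\bar X)=\bar X$, i.e. $\bar X$ solves $X=P_0-P_1^*X^{-1}P_1$, and $H_1=P_1^*H_0^{-*}$; (b) the derivative of $g$ at $\bar X$, written in vectorized form (the matrix $J\in\mathbb{C}^{d^2\times d^2}$ with $\mathrm{vec}(Dg(\bar X)[E])=J\,\mathrm{vec}(E)$ for all $E$), equals $J=\overline{A}\otimes A$; (c) if $\det P(\theta)=0$ for some $\theta\in\mathbb{C}$ with $|\theta|=1$, then $1$ is an eigenvalue of $J$; (d) conversely, if the spectral radius of $A$ is at most $1$ and $1$ is an eigenvalue of $J$, then $\det P(\theta)=0$ for some $|\theta|=1$. Consequently, under $\rho(A)\le 1$, $\det P$ vanishes somewhere on the unit circle iff $\rho(J)=1$ iff the derivative $I-J$ of $f(X)=X-g(X)$ at $\bar X$ is singular.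
   Context: $A^*$ is the conjugate transpose, $\overline{A}$ the entrywise complex conjugate, $A^{-*}=(A^* )^{-1}$, $\otimes$ the Kronecker product, and $\mathrm{vec}$ stacks the columns of a matrix into a vector (so $\mathrm{vec}(ABC)=(C^T\otimes A)\mathrm{vec}(B)$). $\rho(\cdot)$ denotes spectral radius. *)

theory Defs
  imports "HOL-Analysis.Analysis"
begin

text \<open>Complex d x d matrices are rendered as complex^'n^'n (d = CARD('n)).\<close>

definition cadj :: "complex^'n^'m \<Rightarrow> complex^'m^'n" where
  "cadj A = (\<chi> i j. cnj (A $ j $ i))"

definition mconj :: "complex^'n^'m \<Rightarrow> complex^'n^'m" where
  "mconj A = (\<chi> i j. cnj (A $ i $ j))"

definition cscale :: "complex \<Rightarrow> complex^'n^'m \<Rightarrow> complex^'n^'m" where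
  "cscale c A = (\<chi> i j. c * A $ i $ j)"

text \<open>vec stacks the columns: the entry of vec E at index (i,j) is E i j; indices of
  'n \<times> 'n are ordered column-major (j outer, i inner), so this is the usual vec.\<close>
definition vecm :: "complex^'n^'m \<Rightarrow> complex^('m \<times> 'n)" where
  "vecm E = (\<chi> p. E $ fst p $ snd p)"

text \<open>Kronecker product, with rows/columns indexed consistently with vecm, so that
  vecm (A ** X ** C) = kron (transpose C) A *v vecm X.\<close>
definition kron :: "complex^'n^'n \<Rightarrow> complex^'m^'m \<Rightarrow> complex^('m \<times> 'n)^('m \<times> 'n)" where
  "kron B A = (\<chi> p q. B $ snd p $ snd q * A $ fst p $ fst q)"

definition is_eigenvalue :: "complex^'n^'n \<Rightarrow> complex \<Rightarrow> bool" where
  "is_eigenvalue M l \<longleftrightarrow> (\<exists>v. v \<noteq> 0 \<and> M *v v = l *s v)"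

definition spectral_radius :: "complex^'n^'n \<Rightarrow> real" where
  "spectral_radius M = Max {cmod l | l. is_eigenvalue M l}"

end

theory Submission
  imports Defs "HOL-Computational_Algebra.Fundamental_Theorem_Algebra"
begin



lemma mat_mul_left: "(mat c ** (M::'a::comm_semiring_1^'n^'m)) = (\<chi> i j. c * M$i$j)"
  by (simp add: vec_eq_iff matrix_matrix_mult_def mat_def if_distrib if_distribR sum.delta cong: if_cong)

lemma mat_mul_right: "((M::'a::comm_semiring_1^'n^'m) ** mat c) = (\<chi> i j. c * M$i$j)"
  by (simp add: vec_eq_iff matrix_matrix_mult_def mat_def if_distrib if_distribR sum.delta' mult.commute cong: if_cong)

lemma mat_comm: "mat c ** (M::'a::comm_semiring_1^'n^'n) = M ** mat c"
  by (simp add: mat_mul_left mat_mul_right)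

lemma cscale_mat: "cscale c M = mat c ** M"
  by (simp add: cscale_def mat_mul_left)

lemma mat_mat: "mat a ** mat b = (mat (a*b) :: 'a::comm_semiring_1^'n^'n)"
  unfolding mat_mul_left by (simp add: vec_eq_iff mat_def)

lemma mat_add: "mat a + mat b = (mat (a+b) :: 'a::comm_semiring_1^'n^'n)"
  by (simp add: vec_eq_iff mat_def)

lemma mat_diff: "mat a - mat b = (mat (a-b) :: 'a::comm_ring_1^'n^'n)"
  by (simp add: vec_eq_iff mat_def)

lemma mat_uminus: "- mat a = (mat (-a) :: 'a::comm_ring_1^'n^'n)"
  by (simp add: vec_eq_iff mat_def)

lemma matrix_add_rdistrib': "((B + C) ** A) = (B ** A) + (C ** (A::'a::semiring_1^_^_))"
  by (simp add: vec_eq_iff matrix_matrix_mult_def distrib_right sum.distrib)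

lemma matrix_sub_ldistrib: "(A ** (B - C)) = (A ** B) - (A ** (C::'a::ring_1^_^_))"
  by (simp add: vec_eq_iff matrix_matrix_mult_def right_diff_distrib sum_subtractf)

lemma matrix_sub_rdistrib: "((B - C) ** A) = (B ** A) - (C ** (A::'a::ring_1^_^_))"
  by (simp add: vec_eq_iff matrix_matrix_mult_def left_diff_distrib sum_subtractf)

lemma matrix_neg_left: "((- B) ** A) = - (B ** (A::'a::ring_1^_^_))"
  by (simp add: vec_eq_iff matrix_matrix_mult_def sum_negf)

lemma matrix_neg_right: "(A ** (- B)) = - (A ** (B::'a::ring_1^_^_))"
  by (simp add: vec_eq_iff matrix_matrix_mult_def sum_negf)

lemma matrix_zero_left[simp]: "(0 ** (A::'a::semiring_1^_^_)) = 0"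
  by (simp add: vec_eq_iff matrix_matrix_mult_def)

lemma matrix_zero_right[simp]: "(A ** (0::'a::semiring_1^_^_)) = 0"
  by (simp add: vec_eq_iff matrix_matrix_mult_def)

lemma mat_one_nz: "(mat 1 :: 'a::zero_neq_one^'n^'n) \<noteq> 0"
proof
  assume "(mat 1 :: 'a^'n^'n) = 0"
  then have "(mat 1 :: 'a^'n^'n) $ undefined $ undefined = 0" by simp
  then show False by (simp add: mat_def)
qed

lemma invertible_mat: "c \<noteq> 0 \<Longrightarrow> invertible (mat (c::'a::field) :: 'a^'n^'n)"
  unfolding invertible_def by (rule exI[of _ "mat (inverse c)"]) (simp add: mat_mat)

lemma cadj_mult: "cadj (A ** B) = cadj B ** cadj A"
  by (simp add: cadj_def vec_eq_iff matrix_matrix_mult_def mult.commute)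

lemma cadj_cadj[simp]: "cadj (cadj A) = A"
  by (simp add: cadj_def vec_eq_iff)

lemma cadj_add: "cadj (A + B) = cadj A + cadj B"
  by (simp add: cadj_def vec_eq_iff)

lemma cadj_diff: "cadj (A - B) = cadj A - cadj B"
  by (simp add: cadj_def vec_eq_iff)

lemma cadj_mat: "cadj (mat c) = (mat (cnj c) :: complex^'n^'n)"
  by (simp add: cadj_def vec_eq_iff mat_def)

lemma invertible_cadj: "invertible (A::complex^('n::finite)^'n) \<Longrightarrow> invertible (cadj A)"
  unfolding invertible_def by (metis cadj_mult cadj_mat complex_cnj_one)

lemma invertible_cadj_iff: "invertible (cadj (A::complex^('n::finite)^'n)) \<longleftrightarrow> invertible A"
  by (metis invertible_cadj cadj_cadj)

lemma minv: assumes "invertible (A::complex^('n::finite)^'n)"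
  shows "A ** matrix_inv A = mat 1" "matrix_inv A ** A = mat 1"
  using assms unfolding invertible_def matrix_inv_def by (metis (mono_tags, lifting) someI_ex)+

lemma minv_unique: assumes "B ** (A::complex^('n::finite)^'n) = mat 1" shows "matrix_inv A = B"
proof -
  have i: "invertible A" using assms invertible_left_inverse by blast
  have "matrix_inv A = (B ** A) ** matrix_inv A" by (simp add: assms)
  also have "\<dots> = B" by (metis matrix_mul_assoc minv(1)[OF i] matrix_mul_rid)
  finally show ?thesis .
qed

lemma invertible_iff_ker: "invertible (A::complex^('n::finite)^'n) \<longleftrightarrow> (\<forall>x. A *v x = 0 \<longrightarrow> x = 0)"
  by (simp add: invertible_left_inverse matrix_left_invertible_ker)

lemma mvec_scale: "(A::complex^('n::finite)^'n) *v (c *s v) = c *s (A *v v)"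
  by (simp add: vec_eq_iff matrix_vector_mult_def sum_distrib_left algebra_simps)

lemma mat_mvec: "(mat c :: complex^('n::finite)^'n) *v v = c *s v"
  by (simp add: vec_eq_iff matrix_vector_mult_def mat_def if_distrib if_distribR sum.delta cong: if_cong)

lemma eig_iff: "is_eigenvalue (M::complex^('n::finite)^'n) l \<longleftrightarrow> \<not> invertible (M - mat l)"
  unfolding is_eigenvalue_def invertible_iff_ker
  by (auto simp: matrix_vector_mult_diff_rdistrib mat_mvec)



definition peval :: "complex poly \<Rightarrow> complex^'n^'n \<Rightarrow> complex^'n^'n" where
  "peval q M = fold_coeffs (\<lambda>a B. mat a + M ** B) q 0"

lemma peval_0[simp]: "peval 0 M = 0"
  by (simp add: peval_def)

lemma peval_pCons: "peval (pCons a p) M = mat a + M ** peval p M"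
proof (cases "a = 0 \<and> p = 0")
  case True then show ?thesis by (simp add: peval_def)
next
  case False then show ?thesis by (auto simp: peval_def)
qed

lemma peval_add: "peval (p + q) M = peval p M + peval q M"
proof (induction p q rule: poly_induct2)
  case 0 then show ?case by simp
next
  case (pCons a p b q)
  then show ?case by (simp add: peval_pCons matrix_add_ldistrib mat_add[symmetric] algebra_simps)
qed

lemma peval_smult: "peval (smult c p) M = mat c ** peval p (M::complex^('n::finite)^'n)"
proof (induction p)
  case 0 then show ?case by simp
next
  case (pCons a p)
  then show ?case
    by (simp add: peval_pCons matrix_add_ldistrib mat_mat matrix_mul_assoc mat_comm[of c M])
qed

lemma peval_minus: "peval (- p) M = - peval p (M::complex^('n::finite)^'n)"
proof -
  have "peval (- p) M = peval (smult (-1) p) M" by simp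
  also have "\<dots> = mat (-1) ** peval p M" by (rule peval_smult)
  also have "\<dots> = - peval p M" by (simp add: mat_uminus[symmetric] matrix_neg_left)
  finally show ?thesis .
qed

lemma peval_diff: "peval (p - q) M = peval p M - peval q (M::complex^('n::finite)^'n)"
  using peval_add[of p "-q" M] peval_minus[of q M] by simp

lemma peval_mult: "peval (p * q) M = peval p M ** peval q (M::complex^('n::finite)^'n)"
proof (induction p)
  case 0 then show ?case by simp
next
  case (pCons a p)
  then show ?case
    by (simp add: peval_pCons peval_add peval_smult matrix_add_rdistrib' matrix_mul_assoc)
qed

lemma peval_lin: "peval [:-r, 1:] M = M - mat r"
  by (simp add: peval_pCons mat_uminus[symmetric])

lemma peval_sum: "peval (\<Sum>k\<in>S. f k) M = (\<Sum>k\<in>S. peval (f k) M)"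
  by (induct S rule: infinite_finite_induct) (auto simp: peval_add)

primrec pl :: "complex^'n^'n \<Rightarrow> complex list \<Rightarrow> complex^'n^'n" where
  "pl M [] = mat 1"
| "pl M (c#cs) = (M - mat c) ** pl M cs"

lemma factor_comm: "(M - mat d) ** (M - mat c) = (M - mat c) ** (M - mat (d::complex) :: complex^('n::finite)^'n)"
  unfolding matrix_sub_ldistrib matrix_sub_rdistrib mat_mul_left mat_mul_right by (simp add: vec_eq_iff mat_def algebra_simps)

lemma pl_comm: "pl M cs ** (M - mat c) = (M - mat c) ** pl M (cs::complex list)"
proof (induction cs)
  case Nil then show ?case by simp
next
  case (Cons d cs)
  have "pl M (d#cs) ** (M - mat c) = (M - mat d) ** (pl M cs ** (M - mat c))"
    by (simp add: matrix_mul_assoc)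
  also have "\<dots> = (M - mat d) ** (M - mat c) ** pl M cs" by (simp add: Cons matrix_mul_assoc)
  also have "\<dots> = (M - mat c) ** pl M (d#cs)" by (simp add: factor_comm matrix_mul_assoc)
  finally show ?case .
qed

lemma pl_prune:
  "pl M ms ** N = 0 \<Longrightarrow> \<exists>ms'. set ms' \<subseteq> set ms \<and> (\<forall>m\<in>set ms'. \<not> invertible (M - mat m)) \<and> pl M ms' ** N = 0"
proof (induction ms arbitrary: N)
  case Nil then show ?case by (intro exI[of _ "[]"]) simp
next
  case (Cons c cs)
  show ?case
  proof (cases "invertible (M - mat c)")
    case True
    have "pl M cs ** N = matrix_inv (M - mat c) ** ((M - mat c) ** pl M cs ** N)"
      by (simp add: matrix_mul_assoc minv[OF True])
    also have "\<dots> = 0" using Cons.prems by (simp add: matrix_mul_assoc)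
    finally obtain ms' where "set ms' \<subseteq> set cs" "\<forall>m\<in>set ms'. \<not> invertible (M - mat m)" "pl M ms' ** N = 0"
      using Cons.IH by blast
    then show ?thesis by (intro exI[of _ ms']) auto
  next
    case False
    have "pl M cs ** ((M - mat c) ** N) = 0"
      using Cons.prems by (simp add: matrix_mul_assoc pl_comm)
    then obtain ms' where ms': "set ms' \<subseteq> set cs" "\<forall>m\<in>set ms'. \<not> invertible (M - mat m)"
        "pl M ms' ** ((M - mat c) ** N) = 0"
      using Cons.IH by blast
    have "pl M (c#ms') ** N = 0" using ms'(3) by (simp add: matrix_mul_assoc pl_comm)
    then show ?thesis using ms' False by (intro exI[of _ "c#ms'"]) auto
  qed
qed

lemma factor_exists:
  "q \<noteq> 0 \<Longrightarrow> \<exists>c rs. c \<noteq> 0 \<and> peval q M = mat c ** pl (M::complex^('n::finite)^'n) rs"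
proof (induction "degree q" arbitrary: q rule: less_induct)
  case less
  show ?case
  proof (cases "degree q = 0")
    case True
    then have q: "q = [:coeff q 0:]" using degree_0_id by metis
    then have "coeff q 0 \<noteq> 0" using less.prems by (metis pCons_0_0)
    moreover have "peval q M = mat (coeff q 0) ** pl M []"
      by (subst q) (simp add: peval_pCons)
    ultimately show ?thesis by blast
  next
    case False
    then have "\<not> constant (poly q)" by (simp add: constant_degree)
    then obtain r where "poly q r = 0" using fundamental_theorem_of_algebra by blast
    then obtain q' where q': "q = [:-r, 1:] * q'" using poly_eq_0_iff_dvd by (metis dvdE)
    then have "q' \<noteq> 0" using less.prems by auto
    have "degree q = degree [:-r, 1:] + degree q'"
      unfolding q' by (rule degree_mult_eq) (use \<open>q' \<noteq> 0\<close> in auto)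
    then have "degree q = 1 + degree q'" by simp
    then obtain c rs where c: "c \<noteq> 0" "peval q' M = mat c ** pl M rs"
      using less.hyps[of q'] \<open>q' \<noteq> 0\<close> by auto
    have "peval q M = (M - mat r) ** (mat c ** pl M rs)"
      unfolding q' peval_mult peval_lin c by simp
    also have "\<dots> = mat c ** pl M (r#rs)"
      by (simp add: matrix_mul_assoc mat_comm[of c "M - mat r"])
    finally show ?thesis using c by blast
  qed
qed

lemma vecm_inj: "vecm X = vecm Y \<Longrightarrow> X = Y"
  by (simp add: vecm_def vec_eq_iff)

lemma vecm_add: "vecm (X + Y) = vecm X + vecm Y"
  by (simp add: vecm_def vec_eq_iff)

lemma vecm_zero[simp]: "vecm 0 = 0"
  by (simp add: vecm_def vec_eq_iff)

lemma vecm_diff: "vecm (X - Y) = vecm X - vecm Y"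
  by (simp add: vecm_def vec_eq_iff)

lemma vecm_mat: "vecm (mat c ** X) = c *s vecm (X::complex^('n::finite)^'n)"
  by (simp add: vecm_def vec_eq_iff mat_mul_left)

lemma vecm_sum: "vecm (\<Sum>k\<in>S. f k) = (\<Sum>k\<in>S. vecm (f k))"
  by (induct S rule: infinite_finite_induct) (auto simp: vecm_add)

lemma annihilating_poly: "\<exists>q. q \<noteq> 0 \<and> peval q (M::complex^('n::finite)^'n) = 0"
proof -
  define N where "N = CARD('n \<times> 'n)"
  define w where "w k = vecm (peval (monom 1 k) M)" for k
  show ?thesis
  proof (cases "inj_on w {..N}")
    case True
    define S where "S = w ` {..N}"
    have fS: "finite S" by (simp add: S_def)
    have cS: "card S = Suc N" using True by (simp add: S_def card_image)
    have "vec.dim S \<le> N" unfolding N_def by (rule dim_subset_UNIV_cart_gen)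
    then have "vec.dependent S" using cS by (intro vec.dependent_biggerset_general) auto
    then obtain u where u: "\<exists>v\<in>S. u v \<noteq> 0" "(\<Sum>v\<in>S. u v *s v) = 0"
      using vec.dependent_finite[OF fS] by blast
    define q where "q = (\<Sum>k\<le>N. smult (u (w k)) (monom 1 k))"
    obtain k0 where k0: "k0 \<le> N" "u (w k0) \<noteq> 0" using u(1) S_def by auto
    have "coeff q k0 = u (w k0)"
      using k0(1) by (simp add: q_def coeff_sum coeff_monom if_distrib if_distribR sum.delta' cong: if_cong)
    then have "q \<noteq> 0" using k0 by auto
    moreover have "vecm (peval q M) = (\<Sum>k\<le>N. u (w k) *s w k)"
      by (simp add: q_def peval_sum peval_smult vecm_sum vecm_mat w_def)
    moreover have "(\<Sum>k\<le>N. u (w k) *s w k) = (\<Sum>v\<in>S. u v *s v)"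
      unfolding S_def by (simp add: sum.reindex[OF True])
    ultimately show ?thesis using u(2) by (metis vecm_inj vecm_zero)
  next
    case False
    then obtain i j where ij: "i \<noteq> j" "w i = w j" by (auto simp: inj_on_def)
    define q :: "complex poly" where "q = monom 1 i - monom 1 j"
    have "coeff q i = 1" using ij by (simp add: q_def coeff_monom)
    then have "q \<noteq> 0" by auto
    moreover have "peval q M = 0"
      using ij vecm_inj[of "peval (monom 1 i) M" "peval (monom 1 j) M"]
      by (simp add: q_def peval_diff w_def)
    ultimately show ?thesis by blast
  qed
qed

lemma annihilating_pl:
  "\<exists>ms. (\<forall>m\<in>set ms. is_eigenvalue M m) \<and> pl (M::complex^('n::finite)^'n) ms = 0"
proof -
  obtain q where q: "q \<noteq> 0" "peval q M = 0" using annihilating_poly by blast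
  obtain c rs where c: "c \<noteq> 0" "peval q M = mat c ** pl M rs" using factor_exists[OF q(1)] by blast
  have "pl M rs = mat (inverse c) ** (mat c ** pl M rs)"
    using c(1) by (simp add: matrix_mul_assoc mat_mat)
  then have "pl M rs ** mat 1 = 0" using c q by simp
  then obtain ms where "\<forall>m\<in>set ms. \<not> invertible (M - mat m)" "pl M ms ** mat 1 = 0"
    using pl_prune by blast
  then show ?thesis by (auto simp: eig_iff)
qed

lemma eig_pl: "M *v v = l *s v \<Longrightarrow> pl M ms *v v = (\<Prod>m\<leftarrow>ms. l - m) *s (v::complex^('n::finite))"
proof (induction ms)
  case Nil then show ?case by simp
next
  case (Cons c cs)
  have "pl M (c#cs) *v v = (M - mat c) *v (pl M cs *v v)"
    by (simp add: matrix_vector_mul_assoc)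
  also have "\<dots> = (\<Prod>m\<leftarrow>cs. l - m) *s ((M - mat c) *v v)" using Cons by (simp add: mvec_scale)
  also have "\<dots> = (\<Prod>m\<leftarrow>c#cs. l - m) *s v"
    using Cons.prems by (simp add: matrix_vector_mult_diff_rdistrib mat_mvec algebra_simps vector_sadd_rdistrib)
  finally show ?case .
qed

lemma eig_finite_nonempty:
  "finite {l. is_eigenvalue (M::complex^('n::finite)^'n) l} \<and> {l. is_eigenvalue M l} \<noteq> {}"
proof -
  obtain ms where ms: "\<forall>m\<in>set ms. is_eigenvalue M m" "pl M ms = 0" using annihilating_pl by blast
  have "{l. is_eigenvalue M l} \<subseteq> set ms"
  proof
    fix l assume "l \<in> {l. is_eigenvalue M l}"
    then obtain v where v: "v \<noteq> 0" "M *v v = l *s v" by (auto simp: is_eigenvalue_def)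
    have "(\<Prod>m\<leftarrow>ms. l - m) *s v = 0" using eig_pl[OF v(2), of ms] ms(2) by simp
    then have "(\<Prod>m\<leftarrow>ms. l - m) = 0" using v(1) by simp
    then show "l \<in> set ms" by (auto simp: prod_list_zero_iff)
  qed
  moreover have "ms \<noteq> []" using ms(2) mat_one_nz by auto
  ultimately show ?thesis using ms(1) by (auto intro: finite_subset simp: neq_Nil_conv)
qed



lemma vecm_kron: "kron (mconj A) A *v vecm X = vecm (A ** X ** cadj (A::complex^('n::finite)^'n))"
proof -
  have "(kron (mconj A) A *v vecm X) $ (i, j) = (A ** X ** cadj A) $ i $ j" for i j
  proof -
    have "(kron (mconj A) A *v vecm X) $ (i, j) =
        (\<Sum>q\<in>UNIV \<times> UNIV. cnj (A $ j $ snd q) * A $ i $ fst q * X $ fst q $ snd q)"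
      by (simp add: kron_def vecm_def mconj_def matrix_vector_mult_def UNIV_Times_UNIV)
    also have "\<dots> = (\<Sum>k\<in>UNIV. \<Sum>l\<in>UNIV. cnj (A $ j $ l) * A $ i $ k * X $ k $ l)"
      by (simp add: sum.cartesian_product case_prod_beta)
    also have "\<dots> = (\<Sum>l\<in>UNIV. \<Sum>k\<in>UNIV. A $ i $ k * X $ k $ l * cnj (A $ j $ l))"
      by (subst sum.swap) (simp add: mult_ac)
    also have "\<dots> = (A ** X ** cadj A) $ i $ j"
      by (simp add: matrix_matrix_mult_def cadj_def sum_distrib_right)
    finally show ?thesis .
  qed
  then show ?thesis by (simp add: vec_eq_iff vecm_def)
qed

primrec mpow :: "complex^'n^'n \<Rightarrow> nat \<Rightarrow> complex^'n^'n" where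
  "mpow A 0 = mat 1"
| "mpow A (Suc k) = mpow A k ** A"

lemma mpow_comm: "mpow A k ** A = A ** mpow (A::complex^('n::finite)^'n) k"
  by (induction k) (simp_all add: matrix_mul_assoc[symmetric])

primrec ql :: "complex^'n^'n \<Rightarrow> complex \<Rightarrow> complex list \<Rightarrow> complex^'n^'n" where
  "ql A \<nu> [] = mat 1"
| "ql A \<nu> (m#ms) = (mat \<nu> - mat m ** A) ** ql A \<nu> ms"

lemma Nm_comm: "(mat \<nu> - mat m ** A) ** mpow A k = mpow (A::complex^('n::finite)^'n) k ** (mat \<nu> - mat m ** A)"
proof -
  have "mpow A k ** (mat m ** A) = (mpow A k ** mat m) ** A" by (simp add: matrix_mul_assoc)
  also have "\<dots> = mat m ** (mpow A k ** A)" by (simp add: mat_comm[of m "mpow A k"] matrix_mul_assoc)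
  also have "\<dots> = mat m ** A ** mpow A k" by (simp add: mpow_comm matrix_mul_assoc)
  finally have 1: "mpow A k ** (mat m ** A) = mat m ** A ** mpow A k" .
  show ?thesis
    by (simp add: matrix_sub_ldistrib matrix_sub_rdistrib 1 mat_comm[of \<nu> "mpow A k"])
qed

lemma ql_identity:
  assumes X: "A ** X ** cadj A = mat \<nu> ** X"
  shows "ql A \<nu> ms ** X = mpow (A::complex^('n::finite)^'n) (length ms) ** X ** pl (cadj A) ms"
proof (induction ms)
  case Nil then show ?case by simp
next
  case (Cons m ms)
  have base: "(mat \<nu> - mat m ** A) ** X = A ** X ** (cadj A - mat m)"
  proof -
    have "mat m ** A ** X = A ** X ** mat m" by (metis matrix_mul_assoc mat_comm)
    then show ?thesis by (simp add: matrix_sub_ldistrib matrix_sub_rdistrib X[symmetric])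
  qed
  have "ql A \<nu> (m#ms) ** X = (mat \<nu> - mat m ** A) ** (ql A \<nu> ms ** X)"
    by (simp add: matrix_mul_assoc)
  also have "\<dots> = ((mat \<nu> - mat m ** A) ** mpow A (length ms)) ** X ** pl (cadj A) ms"
    by (simp add: Cons matrix_mul_assoc)
  also have "\<dots> = mpow A (length ms) ** ((mat \<nu> - mat m ** A) ** X) ** pl (cadj A) ms"
    by (simp add: Nm_comm matrix_mul_assoc)
  also have "\<dots> = mpow A (length (m#ms)) ** X ** pl (cadj A) (m#ms)"
    by (simp add: base matrix_mul_assoc)
  finally show ?case .
qed

lemma invertible_one: "invertible (mat 1 :: complex^('n::finite)^'n)"
  using invertible_mat[of "1::complex"] by simp

lemma ql_inv: "(\<forall>m\<in>set ms. invertible (mat \<nu> - mat m ** A)) \<Longrightarrow> invertible (ql (A::complex^('n::finite)^'n) \<nu> ms)"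
  by (induction ms) (auto intro: invertible_mult invertible_one)

lemma cadj_eig: "is_eigenvalue (cadj A) m \<Longrightarrow> is_eigenvalue (A::complex^('n::finite)^'n) (cnj m)"
  unfolding eig_iff
  by (metis cadj_diff cadj_mat complex_cnj_cnj invertible_cadj_iff)

lemma J_eig:
  assumes "is_eigenvalue (kron (mconj A) A) \<nu>"
  shows "\<exists>l u. is_eigenvalue (A::complex^('n::finite)^'n) l \<and> is_eigenvalue A u \<and> \<nu> = cnj l * u"
proof -
  obtain v where v: "v \<noteq> 0" "kron (mconj A) A *v v = \<nu> *s v"
    using assms by (auto simp: is_eigenvalue_def)
  define X :: "complex^'n^'n" where "X = (\<chi> i j. v $ (i, j))"
  have vX: "vecm X = v" by (simp add: X_def vecm_def vec_eq_iff)
  have "X \<noteq> 0" using v(1) vX by auto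
  have XA: "A ** X ** cadj A = mat \<nu> ** X"
    using v(2) by (intro vecm_inj) (simp add: vecm_kron[symmetric] vX vecm_mat)
  obtain ms where ms: "\<forall>m\<in>set ms. is_eigenvalue (cadj A) m" "pl (cadj A) ms = 0"
    using annihilating_pl by blast
  have q0: "ql A \<nu> ms ** X = 0" using ql_identity[OF XA, of ms] ms(2) by simp
  have "\<exists>m\<in>set ms. \<not> invertible (mat \<nu> - mat m ** A)"
  proof (rule ccontr)
    assume "\<not> ?thesis"
    then have "invertible (ql A \<nu> ms)" by (intro ql_inv) auto
    then have "X = matrix_inv (ql A \<nu> ms) ** (ql A \<nu> ms ** X)"
      by (simp add: matrix_mul_assoc minv)
    with q0 \<open>X \<noteq> 0\<close> show False by simp
  qed
  then obtain m where m: "m \<in> set ms" "\<not> invertible (mat \<nu> - mat m ** A)" by blast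
  have l: "is_eigenvalue A (cnj m)" using ms(1) m(1) cadj_eig by blast
  show ?thesis
  proof (cases "m = 0")
    case True
    then have "\<not> invertible (mat \<nu> :: complex^'n^'n)" using m(2) by simp
    then have "\<nu> = 0" using invertible_mat by blast
    then show ?thesis using l True by (intro exI[of _ "cnj m"] exI[of _ "cnj m"]) simp
  next
    case False
    have eq: "mat \<nu> - mat m ** A = mat (-m) ** (A - mat (\<nu>/m))"
      using False by (simp add: matrix_sub_ldistrib mat_mat mat_uminus[symmetric] matrix_neg_left)
    have "\<not> invertible (A - mat (\<nu>/m))"
      using m(2) False unfolding eq by (metis invertible_mult invertible_mat neg_equal_0_iff_equal)
    then have "is_eigenvalue A (\<nu>/m)" by (simp add: eig_iff)
    then show ?thesis using l False by (intro exI[of _ "cnj m"] exI[of _ "\<nu>/m"]) simp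
  qed
qed

lemma eig_to_J:
  assumes "is_eigenvalue (A::complex^('n::finite)^'n) l"
  shows "is_eigenvalue (kron (mconj A) A) (cnj l * l)"
proof -
  obtain v where v: "v \<noteq> 0" "A *v v = l *s v" using assms by (auto simp: is_eigenvalue_def)
  obtain i0 where i0: "v $ i0 \<noteq> 0" using v(1) by (metis vec_eq_iff zero_index)
  define X :: "complex^'n^'n" where "X = (\<chi> i j. v $ i * cnj (v $ j))"
  have Av: "(\<Sum>k\<in>UNIV. A $ i $ k * v $ k) = l * v $ i" for i
    using v(2) by (simp add: vec_eq_iff matrix_vector_mult_def)
  have AX: "(A ** X) $ i $ j = l * v $ i * cnj (v $ j)" for i j
  proof -
    have "(A ** X) $ i $ j = (\<Sum>k\<in>UNIV. A $ i $ k * v $ k * cnj (v $ j))"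
      by (simp add: matrix_matrix_mult_def X_def mult.assoc)
    also have "\<dots> = (\<Sum>k\<in>UNIV. A $ i $ k * v $ k) * cnj (v $ j)"
      by (simp add: sum_distrib_right)
    finally show ?thesis by (simp add: Av)
  qed
  have "(A ** X ** cadj A) $ i $ j = (cnj l * l) * X $ i $ j" for i j
  proof -
    have "(A ** X ** cadj A) $ i $ j = (\<Sum>k\<in>UNIV. (A ** X) $ i $ k * cnj (A $ j $ k))"
      unfolding matrix_matrix_mult_def[of "A ** X" "cadj A"] by (simp add: cadj_def)
    also have "\<dots> = (\<Sum>k\<in>UNIV. l * v $ i * (cnj (v $ k) * cnj (A $ j $ k)))"
      by (simp add: AX mult_ac)
    also have "\<dots> = l * v $ i * cnj (\<Sum>k\<in>UNIV. A $ j $ k * v $ k)"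
      by (simp add: sum_distrib_left cnj_sum mult_ac)
    finally have "(A ** X ** cadj A) $ i $ j = l * v $ i * cnj (\<Sum>k\<in>UNIV. A $ j $ k * v $ k)" .
    then show ?thesis unfolding Av by (simp add: X_def mult_ac)
  qed
  then have "A ** X ** cadj A = mat (cnj l * l) ** X" by (simp add: vec_eq_iff mat_mul_left)
  then have "kron (mconj A) A *v vecm X = (cnj l * l) *s vecm X"
    by (simp add: vecm_kron vecm_mat)
  moreover have "vecm X \<noteq> 0"
  proof
    assume "vecm X = 0"
    then have "vecm X $ (i0, i0) = 0" by simp
    then show False using i0 by (simp add: vecm_def X_def)
  qed
  ultimately show ?thesis unfolding is_eigenvalue_def by blast
qed



lemma norm_le_l1_gen: "norm (x::'a::real_normed_vector^'n) \<le> (\<Sum>i\<in>UNIV. norm (x$i))"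
  unfolding norm_vec_def by (rule L2_set_le_sum) simp

lemma entry_le: "norm (M $ i $ j) \<le> norm (M::complex^'n^'m)"
  using Finite_Cartesian_Product.norm_nth_le[where x="M$i" and i=j] Finite_Cartesian_Product.norm_nth_le[where x=M and i=i] by linarith

definition KK :: "'n::finite itself \<Rightarrow> real" where "KK _ = real (CARD('n)) ^ 3"

lemma KK_ge1: "KK (TYPE('n::finite)) \<ge> 1"
  unfolding KK_def by (simp add: Suc_le_eq)

lemma norm_mult_le: "norm (M ** N) \<le> KK TYPE('n) * norm (M::complex^('n::finite)^'n) * norm (N::complex^'n^'n)"
proof -
  let ?d = "real CARD('n)"
  have e: "norm ((M ** N) $ i $ j) \<le> ?d * (norm M * norm N)" for i j
  proof -
    have "norm ((M ** N) $ i $ j) = norm (\<Sum>k\<in>UNIV. M $ i $ k * N $ k $ j)"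
      by (simp add: matrix_matrix_mult_def)
    also have "\<dots> \<le> (\<Sum>k\<in>UNIV. norm (M $ i $ k * N $ k $ j))" by (rule norm_sum)
    also have "\<dots> \<le> (\<Sum>k\<in>(UNIV::'n set). norm M * norm N)"
      unfolding norm_mult by (intro sum_mono mult_mono) (auto simp: entry_le)
    finally show ?thesis by simp
  qed
  have "norm (M ** N) \<le> (\<Sum>i\<in>UNIV. norm ((M ** N) $ i))" by (rule norm_le_l1_gen)
  also have "\<dots> \<le> (\<Sum>i\<in>(UNIV::'n set). \<Sum>j\<in>(UNIV::'n set). norm ((M ** N) $ i $ j))"
    by (intro sum_mono norm_le_l1_gen)
  also have "\<dots> \<le> (\<Sum>i\<in>(UNIV::'n set). \<Sum>j\<in>(UNIV::'n set). ?d * (norm M * norm N))"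
    by (intro sum_mono e)
  also have "\<dots> = ?d ^ 3 * norm M * norm N" by (simp add: power3_eq_cube)
  finally show ?thesis by (simp add: KK_def)
qed

lemma norm_mvec_le: "norm (M *v v) \<le> KK TYPE('n) * norm (M::complex^('n::finite)^'n) * norm v"
proof -
  let ?d = "real CARD('n)"
  have e: "norm ((M *v v) $ i) \<le> ?d * (norm M * norm v)" for i
  proof -
    have "norm ((M *v v) $ i) = norm (\<Sum>k\<in>UNIV. M $ i $ k * v $ k)"
      by (simp add: matrix_vector_mult_def)
    also have "\<dots> \<le> (\<Sum>k\<in>UNIV. norm (M $ i $ k * v $ k))" by (rule norm_sum)
    also have "\<dots> \<le> (\<Sum>k\<in>(UNIV::'n set). norm M * norm v)"
      unfolding norm_mult by (intro sum_mono mult_mono) (auto simp: entry_le Finite_Cartesian_Product.norm_nth_le)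
    finally show ?thesis by simp
  qed
  have "norm (M *v v) \<le> (\<Sum>i\<in>UNIV. norm ((M *v v) $ i))" by (rule norm_le_l1_gen)
  also have "\<dots> \<le> (\<Sum>i\<in>(UNIV::'n set). ?d * (norm M * norm v))"
    by (intro sum_mono e)
  also have "\<dots> = ?d ^ 2 * norm M * norm v" by (simp add: power2_eq_square)
  also have "\<dots> \<le> ?d ^ 3 * norm M * norm v"
    by (intro mult_right_mono power_increasing) (auto simp: Suc_le_eq)
  finally show ?thesis by (simp add: KK_def)
qed

lemma matrix_scaleR_right: "M ** (c *\<^sub>R E) = c *\<^sub>R (M ** (E::complex^'n^'m))"
  by (simp add: vec_eq_iff matrix_matrix_mult_def scaleR_sum_right)

lemma matrix_scaleR_left: "(c *\<^sub>R E) ** M = c *\<^sub>R ((E::complex^'n^'m) ** M)"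
  by (simp add: vec_eq_iff matrix_matrix_mult_def scaleR_sum_right)

lemma linear_sandwich: "linear (\<lambda>E. L ** E ** (R::complex^('n::finite)^'n))"
  by (rule linearI) (simp_all add: matrix_add_ldistrib matrix_add_rdistrib' matrix_scaleR_right matrix_scaleR_left)



lemma norm_mult_step:
  fixes X :: "complex^('n::finite)^'n"
  assumes "norm X \<le> b"
  shows "norm (X ** B) \<le> KK TYPE('n) * b * norm (B::complex^('n::finite)^'n)"
proof -
  have "norm (X ** B) \<le> KK TYPE('n) * norm X * norm B" by (rule norm_mult_le)
  also have "\<dots> \<le> KK TYPE('n) * b * norm B"
    using assms KK_ge1[where 'n='n] by (intro mult_right_mono mult_left_mono) auto
  finally show ?thesis .
qed

lemma inv_deriv:
  fixes Xb P Q C :: "complex^('n::finite)^'n"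
  assumes inv: "invertible Xb"
  shows "((\<lambda>X. C - P ** matrix_inv X ** Q) has_derivative
           (\<lambda>E. P ** matrix_inv Xb ** E ** matrix_inv Xb ** Q)) (at Xb)"
proof -
  define K where "K = KK TYPE('n)"
  define Xi where "Xi = matrix_inv Xb"
  define a where "a = norm Xi"
  have K1: "K \<ge> 1" unfolding K_def by (rule KK_ge1)
  have a0: "a \<ge> 0" unfolding a_def by simp
  have XiXb: "Xi ** Xb = mat 1" "Xb ** Xi = mat 1" using minv[OF inv] by (auto simp: Xi_def)
  define d0 where "d0 = 1 / (2 * K * K * (a + 1))"
  have d0: "d0 > 0" using K1 a0 by (simp add: d0_def)
  have small: "K * K * a * norm E \<le> 1/2" if "norm E < d0" for E :: "complex^'n^'n"
  proof -
    have "K * K * a * norm E \<le> K * K * (a + 1) * norm E"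
      using K1 by (intro mult_right_mono mult_left_mono) auto
    also have "\<dots> \<le> K * K * (a + 1) * d0"
      using K1 a0 that by (intro mult_left_mono) auto
    also have "\<dots> = 1/2" using K1 a0 by (simp add: d0_def)
    finally show ?thesis .
  qed
  have XiE: "norm (Xi ** E) \<le> K * a * norm E" for E :: "complex^'n^'n"
    using norm_mult_le[of Xi E] by (simp add: K_def a_def)
  have inv_near: "invertible (Xb + E)" if "norm E < d0" for E :: "complex^'n^'n"
    unfolding invertible_iff_ker
  proof (intro allI impI)
    fix v assume "(Xb + E) *v v = 0"
    then have "Xb *v v = - (E *v v)" by (simp add: matrix_vector_mult_add_rdistrib eq_neg_iff_add_eq_0)
    then have "v = - (Xi *v (E *v v))"
      by (metis XiXb(1) matrix_vector_mul_assoc matrix_vector_mul_lid matrix_vector_mult_0_right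
          matrix_vector_right_distrib neg_eq_iff_add_eq_0)
    then have "norm v = norm (Xi *v (E *v v))" by (metis norm_minus_cancel)
    also have "\<dots> = norm ((Xi ** E) *v v)" by (simp add: matrix_vector_mul_assoc)
    also have "\<dots> \<le> K * norm (Xi ** E) * norm v" unfolding K_def by (rule norm_mvec_le)
    also have "\<dots> \<le> K * (K * a * norm E) * norm v"
      using K1 by (intro mult_right_mono mult_left_mono XiE) auto
    also have "\<dots> = (K * K * a * norm E) * norm v" by simp
    also have "\<dots> \<le> 1/2 * norm v" by (intro mult_right_mono small that) simp
    finally show "v = 0" by simp
  qed
  have Yrel: "matrix_inv (Xb + E) - Xi = - (Xi ** E ** matrix_inv (Xb + E))
        \<and> norm (matrix_inv (Xb + E)) \<le> 2 * a" if "norm E < d0" for E :: "complex^'n^'n"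
  proof -
    define Y where "Y = matrix_inv (Xb + E)"
    have "(Xb + E) ** Y = mat 1" using minv[OF inv_near[OF that]] by (simp add: Y_def)
    then have "Xi ** ((Xb + E) ** Y) = Xi" by simp
    then have Ysum: "Y + Xi ** E ** Y = Xi"
      by (simp add: matrix_add_ldistrib matrix_add_rdistrib' matrix_mul_assoc XiXb)
    then have Yeq: "Y - Xi = - (Xi ** E ** Y)" by (simp add: algebra_simps)
    have Yd: "Xi - Xi ** E ** Y = Y" using Ysum by (metis add_diff_cancel_right')
    have "norm Y = norm (Xi - Xi ** E ** Y)" by (simp only: Yd)
    also have "\<dots> \<le> a + norm (Xi ** E ** Y)" unfolding a_def by (rule norm_triangle_ineq4)
    also have "norm (Xi ** E ** Y) \<le> K * (K * a * norm E) * norm Y"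
      unfolding K_def by (rule norm_mult_step) (use XiE in \<open>simp add: K_def\<close>)
    also have "K * (K * a * norm E) * norm Y = (K * K * a * norm E) * norm Y" by simp
    also have "\<dots> \<le> 1/2 * norm Y" by (intro mult_right_mono small that) simp
    finally have "norm Y \<le> 2 * a" by simp
    then show ?thesis using Yeq by (simp add: Y_def)
  qed
  define C0 where "C0 = K * (K * (K * (K * norm P * a) * (K * (K * a) * (2 * a))) ) * norm Q"
  have C00: "C0 \<ge> 0" using K1 a0 by (simp add: C0_def)
  have rem: "norm ((C - P ** matrix_inv (Xb + E) ** Q) - (C - P ** Xi ** Q) - P ** Xi ** E ** Xi ** Q)
      \<le> C0 * norm E * norm E" if "norm E < d0" for E :: "complex^'n^'n"
  proof -
    define Y where "Y = matrix_inv (Xb + E)"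
    have Yr: "Y - Xi = - (Xi ** E ** Y)" "norm Y \<le> 2 * a" using Yrel[OF that] by (auto simp: Y_def)
    have eq: "(C - P ** Y ** Q) - (C - P ** Xi ** Q) - P ** Xi ** E ** Xi ** Q
        = - (P ** Xi ** E ** (Xi ** E ** Y) ** Q)"
    proof -
      have "(C - P ** Y ** Q) - (C - P ** Xi ** Q) - P ** Xi ** E ** Xi ** Q
          = - (P ** (Y - Xi) ** Q) - P ** Xi ** E ** Xi ** Q"
        by (simp add: matrix_sub_ldistrib matrix_sub_rdistrib)
      also have "\<dots> = P ** Xi ** E ** Y ** Q - P ** Xi ** E ** Xi ** Q"
        by (simp add: Yr(1) matrix_neg_left matrix_neg_right matrix_mul_assoc)
      also have "\<dots> = P ** Xi ** E ** (Y - Xi) ** Q"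
        by (simp add: matrix_sub_ldistrib matrix_sub_rdistrib matrix_mul_assoc)
      also have "\<dots> = - (P ** Xi ** E ** (Xi ** E ** Y) ** Q)"
        by (simp add: Yr(1) matrix_neg_left matrix_neg_right)
      finally show ?thesis .
    qed
    have nW: "norm (Xi ** E ** Y) \<le> K * (K * a * norm E) * (2 * a)"
    proof -
      have "norm (Xi ** E ** Y) \<le> K * (K * a * norm E) * norm Y"
        unfolding K_def by (rule norm_mult_step) (use XiE in \<open>simp add: K_def\<close>)
      also have "\<dots> \<le> K * (K * a * norm E) * (2 * a)"
        using K1 a0 Yr(2) by (intro mult_left_mono) auto
      finally show ?thesis .
    qed
    have "norm (P ** Xi) \<le> K * norm P * a"
      using norm_mult_le[of P Xi] by (simp add: K_def a_def)
    then have "norm (P ** Xi ** E) \<le> K * (K * norm P * a) * norm E"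
      unfolding K_def by (rule norm_mult_step)
    then have "norm (P ** Xi ** E ** (Xi ** E ** Y)) \<le> K * (K * (K * norm P * a) * norm E) * norm (Xi ** E ** Y)"
      unfolding K_def by (rule norm_mult_step)
    also have "\<dots> \<le> K * (K * (K * norm P * a) * norm E) * (K * (K * a * norm E) * (2 * a))"
      using K1 a0 by (intro mult_left_mono nW) auto
    finally have "norm (P ** Xi ** E ** (Xi ** E ** Y) ** Q) \<le>
       K * (K * (K * (K * norm P * a) * norm E) * (K * (K * a * norm E) * (2 * a))) * norm Q"
      unfolding K_def by (rule norm_mult_step)
    also have "\<dots> = C0 * norm E * norm E" by (simp add: C0_def mult_ac)
    finally have F: "norm (P ** Xi ** E ** (Xi ** E ** Y) ** Q) \<le> C0 * norm E * norm E" .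
    show ?thesis unfolding Y_def[symmetric] eq norm_minus_cancel by (rule F)
  qed
  show ?thesis
    unfolding has_derivative_at_alt
  proof (intro conjI allI impI)
    show "bounded_linear (\<lambda>E. P ** matrix_inv Xb ** E ** matrix_inv Xb ** Q)"
    proof -
      have "linear (\<lambda>E. (P ** Xi) ** E ** (Xi ** Q))" by (rule linear_sandwich)
      then show ?thesis
        by (simp add: linear_conv_bounded_linear matrix_mul_assoc Xi_def)
    qed
  next
    fix e :: real assume e: "e > 0"
    define d where "d = min d0 (e / (C0 + 1))"
    have "d > 0" using d0 e C00 by (simp add: d_def)
    moreover have "norm ((C - P ** matrix_inv y ** Q) - (C - P ** matrix_inv Xb ** Q)
        - P ** matrix_inv Xb ** (y - Xb) ** matrix_inv Xb ** Q) \<le> e * norm (y - Xb)"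
      if "norm (y - Xb) < d" for y
    proof -
      define E where "E = y - Xb"
      have y: "y = Xb + E" by (simp add: E_def)
      have nE: "norm E < d0" "norm E < e / (C0 + 1)" using that by (auto simp: d_def E_def)
      have "C0 * norm E \<le> (C0 + 1) * (e / (C0 + 1))"
        using nE(2) C00 by (intro mult_mono) auto
      also have "\<dots> = e" using C00 by simp
      finally have "C0 * norm E \<le> e" .
      then have "C0 * norm E * norm E \<le> e * norm E" by (intro mult_right_mono) auto
      then show ?thesis using rem[OF nE(1)] unfolding y by (simp add: Xi_def E_def)
    qed
    ultimately show "\<exists>d>0. \<forall>y. norm (y - Xb) < d \<longrightarrow>
        norm ((C - P ** matrix_inv y ** Q) - (C - P ** matrix_inv Xb ** Q)
          - P ** matrix_inv Xb ** (y - Xb) ** matrix_inv Xb ** Q) \<le> e * norm (y - Xb)"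
      by blast
  qed
qed



lemma invertible_matmul_iff:
  "c \<noteq> 0 \<Longrightarrow> invertible (mat c ** M) \<longleftrightarrow> invertible (M::complex^('n::finite)^'n)"
proof
  assume c: "c \<noteq> 0" and i: "invertible (mat c ** M)"
  have "M = mat (inverse c) ** (mat c ** M)" using c by (simp add: matrix_mul_assoc mat_mat)
  then show "invertible M" using i invertible_mat[of "inverse c"] c by (metis invertible_mult inverse_eq_imp_eq inverse_zero)
next
  assume "c \<noteq> 0" "invertible M"
  then show "invertible (mat c ** M)" by (intro invertible_mult invertible_mat)
qed

lemma invertible_prod_left:
  assumes "invertible ((M::complex^('n::finite)^'n) ** (N::complex^('n::finite)^'n))" shows "invertible M"
proof -
  obtain B where "M ** N ** B = mat 1" using assms unfolding invertible_right_inverse by blast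
  then have "M ** (N ** B) = mat 1" by (simp add: matrix_mul_assoc)
  then show ?thesis using invertible_right_inverse by blast
qed

lemma invertible_prod_right_cancel:
  assumes "invertible (N::complex^('n::finite)^'n)"
  shows "invertible ((M::complex^'n^'n) ** N) \<longleftrightarrow> invertible M"
proof
  assume "invertible (M ** N)"
  then show "invertible M" by (rule invertible_prod_left)
next
  assume "invertible M" then show "invertible (M ** N)" using assms by (rule invertible_mult)
qed

lemma invertible_gram: "invertible (M ** cadj M) \<longleftrightarrow> invertible (M::complex^('n::finite)^'n)"
  by (metis invertible_prod_left invertible_mult invertible_cadj)

lemma unit_inverse: "cmod \<theta> = 1 \<Longrightarrow> inverse \<theta> = cnj \<theta>"
proof -
  assume "cmod \<theta> = 1"
  then have "\<theta> * cnj \<theta> = 1" by (metis complex_norm_square of_real_1 power_one)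
  then show ?thesis by (metis inverse_unique)
qed

lemma gram_expand:
  fixes H0 H1 :: "complex^('n::finite)^'n"
  assumes "cnj c = t" "c * t = 1"
  shows "(H0 + mat c ** H1) ** cadj (H0 + mat c ** H1)
       = cscale c (H1 ** cadj H0) + (H0 ** cadj H0 + H1 ** cadj H1) + cscale t (H0 ** cadj H1)"
proof -
  have "((H0 + mat c ** H1) ** cadj (H0 + mat c ** H1)) $ i $ j
       = (cscale c (H1 ** cadj H0) + (H0 ** cadj H0 + H1 ** cadj H1) + cscale t (H0 ** cadj H1)) $ i $ j" for i j
  proof -
    have "((H0 + mat c ** H1) ** cadj (H0 + mat c ** H1)) $ i $ j
        = (\<Sum>k\<in>UNIV. (H0$i$k + c * H1$i$k) * (cnj (H0$j$k) + t * cnj (H1$j$k)))"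
      unfolding mat_mul_left by (simp add: matrix_matrix_mult_def cadj_def assms(1)[symmetric])
    also have "\<dots> = (\<Sum>k\<in>UNIV. H0$i$k * cnj (H0$j$k) + t * (H0$i$k * cnj (H1$j$k))
        + c * (H1$i$k * cnj (H0$j$k)) + (c * t) * (H1$i$k * cnj (H1$j$k)))"
      by (intro sum.cong refl) (simp add: algebra_simps)
    also have "\<dots> = (cscale c (H1 ** cadj H0) + (H0 ** cadj H0 + H1 ** cadj H1) + cscale t (H0 ** cadj H1)) $ i $ j"
      by (simp add: assms(2) cscale_def matrix_matrix_mult_def cadj_def sum.distrib sum_distrib_left)
    finally show ?thesis .
  qed
  then show ?thesis by (simp add: vec_eq_iff)
qed

lemma sr_facts:
  fixes M :: "complex^('n::finite)^'n"
  shows "is_eigenvalue M l \<Longrightarrow> cmod l \<le> spectral_radius M"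
    and "\<exists>l. is_eigenvalue M l \<and> cmod l = spectral_radius M"
proof -
  have fin: "finite {cmod l | l. is_eigenvalue M l}"
    using eig_finite_nonempty[of M] by (simp add: setcompr_eq_image)
  have ne: "{cmod l | l. is_eigenvalue M l} \<noteq> {}" using eig_finite_nonempty[of M] by auto
  show "is_eigenvalue M l \<Longrightarrow> cmod l \<le> spectral_radius M"
    unfolding spectral_radius_def using fin by (intro Max_ge) auto
  show "\<exists>l. is_eigenvalue M l \<and> cmod l = spectral_radius M"
    using Max_in[OF fin ne] unfolding spectral_radius_def by auto
qed

lemma sr_le: "spectral_radius (M::complex^('n::finite)^'n) \<le> r \<Longrightarrow> is_eigenvalue M l \<Longrightarrow> cmod l \<le> r"
  using sr_facts(1) by fastforce

lemma prod_unit: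
  assumes "cmod l \<le> 1" "cmod u \<le> 1" "cmod (cnj l * u) \<ge> 1"
  shows "cmod u = 1" "cmod (cnj l * u) = 1"
proof -
  have "cmod (cnj l * u) = cmod l * cmod u" by (simp add: norm_mult)
  also have "\<dots> \<le> 1 * cmod u" using assms by (intro mult_right_mono) auto
  finally have "cmod (cnj l * u) \<le> cmod u" by simp
  then show "cmod u = 1" using assms by linarith
  have "cmod l * cmod u \<le> 1 * 1" using assms by (intro mult_mono) auto
  then show "cmod (cnj l * u) = 1" using assms by (simp add: norm_mult)
qed

theorem mainTheorem3:
  fixes H0 H1 :: "complex^'n^'n"
    and P0 P1 Xbar A :: "complex^'n^'n"
    and P :: "complex \<Rightarrow> complex^'n^'n"
    and g :: "complex^'n^'n \<Rightarrow> complex^'n^'n"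
    and J :: "complex^('n \<times> 'n)^('n \<times> 'n)"
  assumes inv: "invertible H0"
  defines "P0 \<equiv> H0 ** cadj H0 + H1 ** cadj H1"
    and "P1 \<equiv> H0 ** cadj H1"
    and "P \<equiv> (\<lambda>z. cscale (inverse z) (cadj P1) + P0 + cscale z P1)"
    and "Xbar \<equiv> H0 ** cadj H0"
    and "A \<equiv> H1 ** matrix_inv H0"
    and "g \<equiv> (\<lambda>X. P0 - cadj P1 ** matrix_inv X ** P1)"
    and "J \<equiv> kron (mconj A) A"
  shows
    "(g Xbar = Xbar \<and> H1 = cadj P1 ** matrix_inv (cadj H0))
     \<and> (\<exists>D. (g has_derivative D) (at Xbar) \<and> (\<forall>E. vecm (D E) = J *v vecm E))
     \<and> ((\<exists>\<theta>. cmod \<theta> = 1 \<and> det (P \<theta>) = 0) \<longrightarrow> is_eigenvalue J 1)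
     \<and> (spectral_radius A \<le> 1 \<and> is_eigenvalue J 1 \<longrightarrow> (\<exists>\<theta>. cmod \<theta> = 1 \<and> det (P \<theta>) = 0))
     \<and> (spectral_radius A \<le> 1 \<longrightarrow>
          (((\<exists>\<theta>. cmod \<theta> = 1 \<and> det (P \<theta>) = 0) \<longleftrightarrow> spectral_radius J = 1)
           \<and> (spectral_radius J = 1 \<longleftrightarrow> \<not> invertible (mat 1 - J))))"
proof -
  note P0d = assms(2) and P1d = assms(3) and Pd = assms(4) and Xd = assms(5)
    and Ad = assms(6) and gd = assms(7) and Jd = assms(8)
  define Xi where "Xi = matrix_inv Xbar"
  have invXbar: "invertible Xbar" unfolding Xd by (intro invertible_mult inv invertible_cadj)
  have XiX: "Xi ** Xbar = mat 1" "Xbar ** Xi = mat 1" using minv[OF invXbar] by (auto simp: Xi_def)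
  have H0i: "H0 ** matrix_inv H0 = mat 1" "matrix_inv H0 ** H0 = mat 1" using minv[OF inv] by auto
  have F1: "cadj H0 ** Xi ** H0 = mat 1"
  proof -
    have "H0 ** (cadj H0 ** Xi ** H0) = H0"
      using XiX(2) by (simp add: Xd matrix_mul_assoc)
    then have "matrix_inv H0 ** (H0 ** (cadj H0 ** Xi ** H0)) = matrix_inv H0 ** H0" by simp
    then show ?thesis by (simp add: matrix_mul_assoc H0i)
  qed
  have F2: "matrix_inv (cadj H0) = Xi ** H0"
    by (rule minv_unique) (use XiX(1) in \<open>simp add: Xd matrix_mul_assoc\<close>)
  have F3: "matrix_inv H0 = cadj H0 ** Xi"
    by (rule minv_unique) (use F1 in \<open>simp add: matrix_mul_assoc\<close>)
  have F4: "cadj (matrix_inv H0) = matrix_inv (cadj H0)"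
    by (rule minv_unique[symmetric]) (simp add: cadj_mult[symmetric] H0i cadj_mat)
  have cP1: "cadj P1 = H1 ** cadj H0" by (simp add: P1d cadj_mult)
  have AeqL: "A = cadj P1 ** Xi" by (simp add: Ad cP1 F3 matrix_mul_assoc)
  have AeqR: "cadj A = Xi ** P1"
    by (simp add: Ad cadj_mult F4 F2 P1d matrix_mul_assoc)
  have AH0: "A ** H0 = H1" by (simp add: Ad matrix_mul_assoc[symmetric] H0i)
  have partA: "g Xbar = Xbar \<and> H1 = cadj P1 ** matrix_inv (cadj H0)"
  proof
    have "cadj P1 ** Xi ** P1 = H1 ** (cadj H0 ** Xi ** H0) ** cadj H1"
      unfolding cP1 by (simp add: P1d matrix_mul_assoc)
    then have "cadj P1 ** Xi ** P1 = H1 ** cadj H1" by (simp add: F1)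
    then show "g Xbar = Xbar" unfolding gd Xi_def[symmetric] by (simp add: P0d Xd)
    show "H1 = cadj P1 ** matrix_inv (cadj H0)"
      by (simp add: cP1 F2 matrix_mul_assoc[symmetric])
         (simp add: matrix_mul_assoc F1[simplified matrix_mul_assoc])
  qed
  have partB: "\<exists>D. (g has_derivative D) (at Xbar) \<and> (\<forall>E. vecm (D E) = J *v vecm E)"
  proof (intro exI conjI allI)
    show "(g has_derivative (\<lambda>E. cadj P1 ** matrix_inv Xbar ** E ** matrix_inv Xbar ** P1)) (at Xbar)"
      unfolding gd by (rule inv_deriv[OF invXbar])
    fix E
    have "cadj P1 ** matrix_inv Xbar ** E ** matrix_inv Xbar ** P1 = A ** E ** cadj A"
      by (simp only: AeqR) (simp add: AeqL Xi_def matrix_mul_assoc)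
    then show "vecm (cadj P1 ** matrix_inv Xbar ** E ** matrix_inv Xbar ** P1) = J *v vecm E"
      by (simp add: Jd vecm_kron)
  qed
  have detP: "det (P \<theta>) = 0 \<longleftrightarrow> is_eigenvalue A (-\<theta>)" if th: "cmod \<theta> = 1" for \<theta>
  proof -
    define c where "c = inverse \<theta>"
    have th0: "\<theta> \<noteq> 0" using th by auto
    have c1: "cnj c = \<theta>" using unit_inverse[OF th] by (simp add: c_def)
    have c2: "c * \<theta> = 1" using th0 unfolding c_def by (rule left_inverse)
    have c3: "c \<noteq> 0" using th0 by (simp add: c_def)
    note c = c1 c2 c3
    define H where "H = H0 + mat c ** H1"
    have PH: "P \<theta> = H ** cadj H"
      unfolding H_def gram_expand[OF c(1,2)] by (simp add: Pd c_def[symmetric] P0d P1d cadj_mult)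
    have H: "H = mat c ** (A - mat (-\<theta>)) ** H0"
    proof -
      have "mat c ** (A - mat (-\<theta>)) = mat 1 + mat c ** A"
        by (simp add: matrix_sub_ldistrib matrix_add_ldistrib mat_mat c(2) mat_uminus[symmetric] add.commute)
      then show ?thesis
        by (simp add: H_def matrix_add_rdistrib' matrix_mul_assoc[symmetric] AH0)
    qed
    have "det (P \<theta>) = 0 \<longleftrightarrow> \<not> invertible (P \<theta>)" by (simp add: invertible_det_nz)
    also have "\<dots> \<longleftrightarrow> \<not> invertible H" by (simp add: PH invertible_gram)
    also have "\<dots> \<longleftrightarrow> \<not> invertible (A - mat (-\<theta>))"
      by (simp add: H invertible_prod_right_cancel[OF inv] invertible_matmul_iff[OF c(3)])
    also have "\<dots> \<longleftrightarrow> is_eigenvalue A (-\<theta>)" by (simp add: eig_iff)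
    finally show ?thesis .
  qed
  have partC: "(\<exists>\<theta>. cmod \<theta> = 1 \<and> det (P \<theta>) = 0) \<longrightarrow> is_eigenvalue J 1"
  proof
    assume "\<exists>\<theta>. cmod \<theta> = 1 \<and> det (P \<theta>) = 0"
    then obtain \<theta> where th: "cmod \<theta> = 1" "det (P \<theta>) = 0" by blast
    then have "is_eigenvalue A (-\<theta>)" using detP by blast
    then have "is_eigenvalue J (cnj (-\<theta>) * (-\<theta>))" unfolding Jd by (rule eig_to_J)
    moreover have "cnj (-\<theta>) * (-\<theta>) = 1"
      using th(1) by (metis complex_norm_square mult.commute of_real_1 power_one minus_mult_minus complex_cnj_minus)
    ultimately show "is_eigenvalue J 1" by simp
  qed
  have fromJ: "\<exists>\<theta>. cmod \<theta> = 1 \<and> det (P \<theta>) = 0"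
    if sr: "spectral_radius A \<le> 1" and nu: "is_eigenvalue J \<nu>" "cmod \<nu> \<ge> 1" for \<nu>
  proof -
    obtain l u where lu: "is_eigenvalue A l" "is_eigenvalue A u" "\<nu> = cnj l * u"
      using J_eig[of A \<nu>] nu(1) by (auto simp: Jd)
    have "cmod u = 1" using prod_unit(1)[of l u] sr_le[OF sr lu(1)] sr_le[OF sr lu(2)] nu(2) lu(3) by simp
    then show ?thesis using detP[of "-u"] lu(2) by (intro exI[of _ "-u"]) simp
  qed
  have partD: "spectral_radius A \<le> 1 \<and> is_eigenvalue J 1 \<longrightarrow> (\<exists>\<theta>. cmod \<theta> = 1 \<and> det (P \<theta>) = 0)"
    using fromJ[of 1] by auto
  have partE: "spectral_radius A \<le> 1 \<longrightarrow>
          (((\<exists>\<theta>. cmod \<theta> = 1 \<and> det (P \<theta>) = 0) \<longleftrightarrow> spectral_radius J = 1)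
           \<and> (spectral_radius J = 1 \<longleftrightarrow> \<not> invertible (mat 1 - J)))"
  proof
    assume sr: "spectral_radius A \<le> 1"
    have Jle: "cmod \<nu> \<le> 1" if ev: "is_eigenvalue J \<nu>" for \<nu>
    proof -
      obtain l u where lu: "is_eigenvalue A l" "is_eigenvalue A u" "\<nu> = cnj l * u"
        using J_eig[OF ev[unfolded Jd]] by blast
      have "cmod l * cmod u \<le> 1 * 1"
        using sr_le[OF sr lu(1)] sr_le[OF sr lu(2)] by (intro mult_mono) auto
      then show ?thesis by (simp add: lu(3) norm_mult)
    qed
    have Q_R: "(\<exists>\<theta>. cmod \<theta> = 1 \<and> det (P \<theta>) = 0) \<longleftrightarrow> spectral_radius J = 1"
    proof
      assume "\<exists>\<theta>. cmod \<theta> = 1 \<and> det (P \<theta>) = 0"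
      then have e1: "is_eigenvalue J 1" using partC by blast
      have "1 \<le> spectral_radius J" using sr_facts(1)[OF e1] by simp
      moreover obtain \<nu> where "is_eigenvalue J \<nu>" "cmod \<nu> = spectral_radius J"
        using sr_facts(2)[of J] by blast
      ultimately show "spectral_radius J = 1" using Jle by fastforce
    next
      assume "spectral_radius J = 1"
      moreover obtain \<nu> where "is_eigenvalue J \<nu>" "cmod \<nu> = spectral_radius J"
        using sr_facts(2)[of J] by blast
      ultimately show "\<exists>\<theta>. cmod \<theta> = 1 \<and> det (P \<theta>) = 0" using fromJ[OF sr] by auto
    qed
    have S: "\<not> invertible (mat 1 - J) \<longleftrightarrow> is_eigenvalue J 1"
    proof -
      have "mat 1 - J = mat (-1) ** (J - mat 1)"
        by (simp add: matrix_sub_ldistrib mat_mat mat_uminus[symmetric] matrix_neg_left)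
      then have "invertible (mat 1 - J) \<longleftrightarrow> invertible (J - mat 1)"
        using invertible_matmul_iff[of "-1" "J - mat 1"] by simp
      then show ?thesis by (simp add: eig_iff)
    qed
    show "((\<exists>\<theta>. cmod \<theta> = 1 \<and> det (P \<theta>) = 0) \<longleftrightarrow> spectral_radius J = 1)
           \<and> (spectral_radius J = 1 \<longleftrightarrow> \<not> invertible (mat 1 - J))"
      using Q_R S partC partD sr by blast
  qed
  show ?thesis using partA partB partC partD partE by blast
qed

end
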